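(* Let $c \geq 1$ and let $\Gamma \subset \mathbb{P}^c$ be a finite set of $d \geq 2c+1$ points in linear semi-uniform position. Then there exists a subset $\Gamma' \subset \Gamma$ of $2c+1$ points which spans $\mathbb{P}^c$ and is $3$-regular.
   Context: The ground field is algebraically closed of arbitrary characteristic. A finite set $\Gamma \subset \mathbb{P}^c$ is in linear semi-uniform position if it spans $\mathbb{P}^c$ and there are integers $\nu(i,\Gamma)$, $0 \leq i \leq c$, such that every $i$-dimensional linear subspace of $\mathbb{P}^c$ spanned by $i+1$ linearly independent points of $\Gamma$ contains exactly $\nu(i,\Gamma)$ points of $\Gamma$. A finite set $\Gamma'$ is $3$-regular if it is $3$-regular in the sense of Castelnuovo–Mumford, i.e. $H^1(\mathbb{P}^c, \mathcal{I}_{\Gamma'}(2)) = 0$; equivalently, $\Gamma'$ imposes independent conditions on quadrics, i.e. for each $p \in \Gamma'$ there is a quadric hypersurface containing $\Gamma' \setminus \{p\}$ but not $p$. *)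

theory Defs
  imports "HOL-Computational_Algebra.Polynomial"
begin

text \<open>Homogeneous coordinates are vectors
 v :: nat \<Rightarrow> 'k supported on {0..c} (i.e. k^(c+1)).
 A point of P^c is a 1-dimensional linear subspace (a line through the origin).\<close>

definition vecs :: "nat \<Rightarrow> (nat \<Rightarrow> 'k::field) set" where
  "vecs c = {v. \<forall>i>c. v i = 0}"

definition proj_pt :: "(nat \<Rightarrow> 'k::field) \<Rightarrow> (nat \<Rightarrow> 'k) set" where
  "proj_pt v = {(\<lambda>i. a * v i) | a. True}"

definition proj_space :: "nat \<Rightarrow> (nat \<Rightarrow> 'k::field) set set" where
  "proj_space c = {proj_pt v | v. v \<in> vecs c \<and> v \<noteq> (\<lambda>_. 0)}"

definition lspan :: "(nat \<Rightarrow> 'k::field) set set \<Rightarrow> (nat \<Rightarrow> 'k) set" where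
  "lspan S = {(\<lambda>i. \<Sum>p\<in>S. f p i) | f. \<forall>p\<in>S. f p \<in> p}"

definition lin_indep_pts :: "(nat \<Rightarrow> 'k::field) set set \<Rightarrow> bool" where
  "lin_indep_pts S \<longleftrightarrow> finite S \<and>
     (\<forall>f. (\<forall>p\<in>S. f p \<in> p) \<and> (\<lambda>i. \<Sum>p\<in>S. f p i) = (\<lambda>_. 0) \<longrightarrow> (\<forall>p\<in>S. f p = (\<lambda>_. 0)))"

definition spans_proj :: "nat \<Rightarrow> (nat \<Rightarrow> 'k::field) set set \<Rightarrow> bool" where
  "spans_proj c S \<longleftrightarrow> lspan S = vecs c"

definition linear_semi_uniform :: "nat \<Rightarrow> (nat \<Rightarrow> 'k::field) set set \<Rightarrow> bool" where
  "linear_semi_uniform c \<Gamma> \<longleftrightarrow> spans_proj c \<Gamma> \<and>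
     (\<exists>\<nu>::nat \<Rightarrow> nat. \<forall>i\<le>c. \<forall>T\<subseteq>\<Gamma>. card T = i + 1 \<and> lin_indep_pts T \<longrightarrow>
        card {p\<in>\<Gamma>. p \<subseteq> lspan T} = \<nu> i)"

definition quad_form :: "nat \<Rightarrow> (nat \<Rightarrow> nat \<Rightarrow> 'k::field) \<Rightarrow> (nat \<Rightarrow> 'k) \<Rightarrow> 'k" where
  "quad_form c a v = (\<Sum>j\<le>c. \<Sum>k\<le>c. a j k * v j * v k)"

definition quadric_contains :: "nat \<Rightarrow> (nat \<Rightarrow> nat \<Rightarrow> 'k::field) \<Rightarrow> (nat \<Rightarrow> 'k) set \<Rightarrow> bool" where
  "quadric_contains c a p \<longleftrightarrow> (\<forall>v\<in>p. quad_form c a v = 0)"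

text \<open>3-regularity (Castelnuovo-Mumford), i.e. H^1(I(2)) = 0, in the equivalent form:
 imposing independent conditions on quadrics.\<close>
definition three_regular :: "nat \<Rightarrow> (nat \<Rightarrow> 'k::field) set set \<Rightarrow> bool" where
  "three_regular c \<Gamma>' \<longleftrightarrow> (\<forall>p\<in>\<Gamma>'. \<exists>a. (\<forall>q\<in>\<Gamma>' - {p}. quadric_contains c a q) \<and> \<not> quadric_contains c a p)"

end

theory Submission
  imports Defs "HOL-Library.Function_Algebras"
begin

definition sc :: "'k::field \<Rightarrow> (nat \<Rightarrow> 'k) \<Rightarrow> (nat \<Rightarrow> 'k)" where
  "sc a v = (\<lambda>i. a * v i)"

interpretation V: vector_space "sc :: 'k::field \<Rightarrow> _"
  by unfold_locales (auto simp: sc_def fun_eq_iff algebra_simps)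

interpretation K: vector_space "(*) :: 'k::field \<Rightarrow> 'k \<Rightarrow> 'k"
  by unfold_locales (auto simp: algebra_simps)

interpretation VK: vector_space_pair "sc :: 'k::field \<Rightarrow> _" "(*) :: 'k::field \<Rightarrow> 'k \<Rightarrow> 'k"
  by unfold_locales

lemma sum_fun_app: "(\<Sum>p\<in>S. f p) i = (\<Sum>p\<in>S. f p i)"
  by (induct S rule: infinite_finite_induct) auto

lemma sc_app[simp]: "sc a v i = a * v i" by (simp add: sc_def)

definition uv :: "nat \<Rightarrow> nat \<Rightarrow> 'k::field" where
  "uv j = (\<lambda>i. if i = j then 1 else 0)"

lemma vecs_expand:
  assumes "v \<in> vecs c"
  shows "v = (\<Sum>j\<le>c. sc (v j) (uv j))"
proof
  fix i
  show "v i = (\<Sum>j\<le>c. sc (v j) (uv j)) i"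
  proof (cases "i \<le> c")
    case True
    have "(\<Sum>j\<le>c. v j * (if i = j then 1 else 0)) = (\<Sum>j\<le>c. if i = j then v j else 0)"
      by (rule sum.cong) auto
    then show ?thesis using True by (simp add: sum_fun_app uv_def)
  next
    case False
    then show ?thesis using assms by (simp add: sum_fun_app uv_def vecs_def)
  qed
qed

lemma subspace_vecs: "V.subspace (vecs c)"
  unfolding V.subspace_def vecs_def by auto

lemma uv_in_vecs: "j \<le> c \<Longrightarrow> uv j \<in> vecs c"
  by (auto simp: uv_def vecs_def)

lemma vecs_span_uv: "vecs c \<subseteq> V.span (uv ` {..c})"
proof
  fix v assume "v \<in> vecs c"
  then have "v = (\<Sum>j\<le>c. sc (v j) (uv j))" by (rule vecs_expand)
  also have "\<dots> \<in> V.span (uv ` {..c})"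
    by (intro V.span_sum V.span_scale V.span_base) auto
  finally show "v \<in> V.span (uv ` {..c})" .
qed

lemma span_uv_vecs: "V.span (uv ` {..c}) = vecs c"
  using vecs_span_uv[of c] V.span_minimal[OF _ subspace_vecs, of "uv ` {..c}" c] uv_in_vecs[of _ c]
  by auto

lemma inj_uv: "inj (uv :: nat \<Rightarrow> nat \<Rightarrow> 'k::field)"
proof (rule injI)
  fix j k assume "uv j = (uv k :: nat \<Rightarrow> 'k)"
  then have "uv j j = (uv k j :: 'k)" by simp
  then show "j = k" by (simp add: uv_def split: if_splits)
qed

lemma indep_uv: "V.independent (uv ` {..c} :: (nat \<Rightarrow> 'k::field) set)"
proof -
  have "\<not> V.dependent (uv ` {..c} :: (nat \<Rightarrow> 'k) set)"
  proof
    assume "V.dependent (uv ` {..c} :: (nat \<Rightarrow> 'k) set)"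
    then obtain u where u: "\<exists>v\<in>uv ` {..c}. u v \<noteq> (0::'k)" "(\<Sum>v\<in>uv ` {..c}. sc (u v) v) = 0"
      using V.dependent_finite[of "uv ` {..c} :: (nat \<Rightarrow> 'k) set"] by blast
    then obtain j where j: "j \<le> c" "u (uv j) \<noteq> 0" by auto
    have r: "(\<Sum>v\<in>uv ` {..c}. sc (u v) v) = (\<Sum>i\<le>c. sc (u (uv i)) (uv i))"
      using sum.reindex[OF inj_on_subset[OF inj_uv subset_UNIV], of "\<lambda>v. sc (u v) v" "{..c}"]
      by (simp add: comp_def)
    have "(\<Sum>i\<le>c. sc (u (uv i)) (uv i)) j = (\<Sum>i\<le>c. if j = i then u (uv i) else 0)"
      unfolding sum_fun_app by (rule sum.cong) (auto simp: uv_def)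
    also have "\<dots> = u (uv j)" using j by simp
    finally have "u (uv j) = 0" using u(2) r by simp
    then show False using j by simp
  qed
  then show ?thesis by simp
qed

lemma card_uv: "card (uv ` {..c}) = Suc c"
  using card_image[OF inj_on_subset[OF inj_uv subset_UNIV], of "{..c}"] by simp

lemma indep_card_le:
  assumes "V.independent X" "X \<subseteq> vecs c"
  shows "finite X \<and> card X \<le> Suc c"
proof -
  have "X \<subseteq> V.span (uv ` {..c})" using assms(2) vecs_span_uv[of c] by blast
  then have "finite X \<and> card X \<le> card (uv ` {..c} :: (nat \<Rightarrow> 'a) set)"
    using V.independent_span_bound[of "uv ` {..c}" X] assms by auto
  then show ?thesis unfolding card_uv .
qed

lemma span_card_ge:
  assumes "finite X" "vecs c \<subseteq> V.span X"
  shows "Suc c \<le> card X"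
proof -
  have "uv ` {..c} \<subseteq> V.span X" using assms(2) uv_in_vecs[of _ c] by blast
  then have "card (uv ` {..c} :: (nat \<Rightarrow> 'a) set) \<le> card X"
    using V.independent_span_bound[OF assms(1) indep_uv[of c]] by auto
  then show ?thesis unfolding card_uv .
qed

lemma linear_vecs:
  assumes "Vector_Spaces.linear sc (*) g" "v \<in> vecs c"
  shows "g v = (\<Sum>j\<le>c. v j * g (uv j))"
proof -
  have "g v = g (\<Sum>j\<le>c. sc (v j) (uv j))" using vecs_expand[OF assms(2)] by simp
  also have "\<dots> = (\<Sum>j\<le>c. v j * g (uv j))"
    using assms(1) by (simp add: VK.linear_sum VK.linear_scale)
  finally show ?thesis .
qed

definition isquad :: "nat \<Rightarrow> ((nat \<Rightarrow> 'k::field) \<Rightarrow> 'k) \<Rightarrow> bool" where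
  "isquad c Q \<longleftrightarrow> (\<exists>a. \<forall>v\<in>vecs c. Q v = quad_form c a v)"

lemma isquad_add:
  assumes "isquad c Q1" "isquad c Q2"
  shows "isquad c (\<lambda>v. Q1 v + Q2 v)"
proof -
  obtain a1 a2 where a: "\<forall>v\<in>vecs c. Q1 v = quad_form c a1 v" "\<forall>v\<in>vecs c. Q2 v = quad_form c a2 v"
    using assms unfolding isquad_def by blast
  show ?thesis unfolding isquad_def
    by (rule exI[of _ "\<lambda>j k. a1 j k + a2 j k"])
      (auto simp: a quad_form_def distrib_right sum.distrib)
qed

lemma isquad_prod:
  assumes "Vector_Spaces.linear sc (*) g1" "Vector_Spaces.linear sc (*) g2"
  shows "isquad c (\<lambda>v. g1 v * g2 v)"
  unfolding isquad_def
proof (rule exI[of _ "\<lambda>j k. g1 (uv j) * g2 (uv k)"], intro ballI)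
  fix v :: "nat \<Rightarrow> 'a" assume v: "v \<in> vecs c"
  have "g1 v * g2 v = (\<Sum>j\<le>c. v j * g1 (uv j)) * (\<Sum>k\<le>c. v k * g2 (uv k))"
    using linear_vecs[OF assms(1) v] linear_vecs[OF assms(2) v] by simp
  also have "\<dots> = quad_form c (\<lambda>j k. g1 (uv j) * g2 (uv k)) v"
    unfolding quad_form_def sum_product by (intro sum.cong refl) (simp only: ac_simps)
  finally show "g1 v * g2 v = quad_form c (\<lambda>j k. g1 (uv j) * g2 (uv k)) v" .
qed



lemma sum_12: "(\<Sum>k<n. if k < m then 1 else 2::nat) = 2*n - min m n"
  by (induction n) auto

lemma arith_sum:
  fixes \<delta> :: "nat \<Rightarrow> nat"
  assumes "1 \<le> m" "m \<le> c" "\<forall>j<m. \<delta> j = 1" "\<forall>k. m \<le> k \<longrightarrow> k \<le> c \<longrightarrow> 2 \<le> \<delta> k"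
    "2*c+1 \<le> (\<Sum>k\<le>c. \<delta> k)"
  shows "2*c+1 \<le> (\<Sum>k\<le>c. min (\<delta> k) (Suc m))"
proof (cases "\<forall>k\<le>c. \<delta> k \<le> Suc m")
  case True
  then have "(\<Sum>k\<le>c. min (\<delta> k) (Suc m)) = (\<Sum>k\<le>c. \<delta> k)" by (intro sum.cong) auto
  then show ?thesis using assms by simp
next
  case False
  then obtain k0 where k0: "k0 \<le> c" "Suc m < \<delta> k0" by auto
  then have mk0: "m \<le> k0" using assms(3) by (metis not_le less_irrefl Suc_lessD Suc_mono less_one linorder_not_le One_nat_def zero_less_Suc)
  let ?g = "\<lambda>k. (if k < m then 1 else 2) + (if k = k0 then m - 1 else (0::nat))"
  have "(\<Sum>k\<le>c. ?g k) = (\<Sum>k\<le>c. if k < m then 1 else 2) + (\<Sum>k\<le>c. if k = k0 then m - 1 else 0)"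
    by (rule sum.distrib)
  also have "(\<Sum>k\<le>c. if k < m then 1 else 2::nat) = 2 * Suc c - m"
    using sum_12[of m "Suc c"] assms(2) by (simp add: lessThan_Suc_atMost)
  also have "(\<Sum>k\<le>c. if k = k0 then m - 1 else (0::nat)) = m - 1"
    using k0 by simp
  finally have sg: "(\<Sum>k\<le>c. ?g k) = 2*c+1" using assms(1,2) by simp
  have "(\<Sum>k\<le>c. ?g k) \<le> (\<Sum>k\<le>c. min (\<delta> k) (Suc m))"
  proof (rule sum_mono)
    fix k assume k: "k \<in> {..c}"
    show "?g k \<le> min (\<delta> k) (Suc m)"
    proof (cases "k < m")
      case True
      then show ?thesis using assms(3) mk0 by auto
    next
      case False
      then have mk: "m \<le> k" by simp
      then have d2: "2 \<le> \<delta> k" using assms(4) k by auto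
      show ?thesis
      proof (cases "k = k0")
        case True
        then show ?thesis using k0 assms(1) False by auto
      next
        case False
        then show ?thesis using d2 mk assms(1) by auto
      qed
    qed
  qed
  then show ?thesis using sg by simp
qed

definition WW :: "(nat \<Rightarrow> nat \<Rightarrow> 'k::field) \<Rightarrow> nat \<Rightarrow> (nat \<Rightarrow> 'k) set" where
  "WW e k = V.span (e ` {..<k})"

locale flagged =
  fixes G :: "(nat \<Rightarrow> 'k::field) set" and c :: nat and \<nu> :: "nat \<Rightarrow> nat"
    and e :: "nat \<Rightarrow> nat \<Rightarrow> 'k"
  assumes finG: "finite G" and Gvecs: "G \<subseteq> vecs c" and G0: "0 \<notin> G"
    and cardG: "2*c+1 \<le> card G" and c1: "1 \<le> c"
    and nonpar: "\<And>x y. x \<in> G \<Longrightarrow> y \<in> G \<Longrightarrow> x \<in> V.span {y} \<Longrightarrow> x = y"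
    and unif: "\<And>i X. i \<le> c \<Longrightarrow> X \<subseteq> G \<Longrightarrow> card X = Suc i \<Longrightarrow> V.independent X \<Longrightarrow>
                 card {x\<in>G. x \<in> V.span X} = \<nu> i"
    and e_in: "e ` {..c} \<subseteq> G" and e_indep: "V.independent (e ` {..c})"
    and e_inj: "inj_on e {..c}" and e_span: "vecs c \<subseteq> V.span (e ` {..c})"
begin

lemma W_mono: "k \<le> l \<Longrightarrow> WW e k \<subseteq> WW e l"
  unfolding WW_def by (intro V.span_mono) auto

lemma W_Suc: "WW e (Suc k) = V.span (insert (e k) (e ` {..<k}))"
  unfolding WW_def by (simp add: lessThan_Suc)

lemma e_notin_W: assumes "k \<le> c" shows "e k \<notin> WW e k"
proof
  assume "e k \<in> WW e k"
  moreover have "WW e k \<subseteq> V.span (e ` {..c} - {e k})"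
    unfolding WW_def using e_inj assms
    by (intro V.span_mono) (auto simp: inj_on_def)
  ultimately have "V.dependent (e ` {..c})"
    unfolding V.dependent_def using assms by blast
  then show False using e_indep by simp
qed

lemma e_in_W: "e k \<in> WW e (Suc k)"
  unfolding WW_def by (intro V.span_base) auto

lemma indep_sub: "X \<subseteq> e ` {..c} \<Longrightarrow> V.independent X"
  using V.independent_mono[OF e_indep] by blast

lemma coord:
  assumes "k \<le> c"
  obtains h where "Vector_Spaces.linear sc (*) h" "\<And>x. x \<in> WW e k \<Longrightarrow> h x = 0"
    "\<And>x. x \<in> WW e (Suc k) \<Longrightarrow> x \<notin> WW e k \<Longrightarrow> h x \<noteq> 0"
proof -
  obtain h where h: "Vector_Spaces.linear sc (*) h"
    "\<forall>x\<in>e ` {..c}. h x = (\<lambda>x. if x = e k then 1 else 0) x"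
    using VK.linear_independent_extend[OF e_indep, where f="\<lambda>x. if x = e k then 1 else 0"] by blast
  have h0: "h x = 0" if "x \<in> WW e k" for x
  proof -
    have "\<forall>y\<in>e ` {..<k}. h y = 0"
      using h(2) e_inj assms by (auto simp: inj_on_def)
    then show ?thesis using VK.linear_eq_0_on_span[OF h(1)] that unfolding WW_def by blast
  qed
  have h1: "h x \<noteq> 0" if xx: "x \<in> WW e (Suc k)" "x \<notin> WW e k" for x
  proof -
    have "x \<in> V.span (insert (e k) (e ` {..<k}))" using xx(1) W_Suc by simp
    then obtain t where t: "x - sc t (e k) \<in> WW e k"
      unfolding WW_def V.span_breakdown_eq by blast
    have "h x = h (x - sc t (e k)) + h (sc t (e k))"
      using VK.linear_add[OF h(1), of "x - sc t (e k)" "sc t (e k)"] by simp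
    also have "\<dots> = t" using h0[OF t] VK.linear_scale[OF h(1)] h(2) assms by simp
    finally have hx: "h x = t" .
    show ?thesis
    proof
      assume "h x = 0"
      then have "t = 0" using hx by simp
      then show False using t xx(2) by (simp add: V.scale_zero_left)
    qed
  qed
  show ?thesis using that h(1) h0 h1 by blast
qed

lemma layered:
  assumes S: "\<And>k. k \<le> c \<Longrightarrow> S k \<subseteq> WW e (Suc k) - WW e k"
    and Si: "\<And>k. k \<le> c \<Longrightarrow> V.independent (S k)"
    and K: "K \<le> Suc c"
  shows "\<forall>p\<in>(\<Union>k<K. S k). \<exists>Q. isquad c Q \<and> (\<forall>q\<in>(\<Union>k<K. S k) - {p}. Q q = 0) \<and> Q p \<noteq> 0"
  using K
proof (induction K)
  case 0
  then show ?case by simp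
next
  case (Suc K)
  then have Kc: "K \<le> c" by simp
  have IH: "\<forall>p\<in>(\<Union>k<K. S k). \<exists>Q. isquad c Q \<and> (\<forall>q\<in>(\<Union>k<K. S k) - {p}. Q q = 0) \<and> Q p \<noteq> 0"
    using Suc by simp
  obtain h where h: "Vector_Spaces.linear sc (*) h" "\<And>x. x \<in> WW e K \<Longrightarrow> h x = 0"
    "\<And>x. x \<in> WW e (Suc K) \<Longrightarrow> x \<notin> WW e K \<Longrightarrow> h x \<noteq> 0"
    using coord[OF Kc] by blast
  have oldW: "q \<in> WW e K" if qq: "q \<in> (\<Union>k<K. S k)" for q
  proof -
    obtain k where k: "k < K" "q \<in> S k" using qq by blast
    then have "q \<in> WW e (Suc k)" using S[of k] Kc by auto
    then show ?thesis using W_mono[of "Suc k" K] k by auto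
  qed
  have hold: "h q = 0" if "q \<in> (\<Union>k<K. S k)" for q using h(2) oldW that by blast
  have hnew: "h q \<noteq> 0" if "q \<in> S K" for q using h(3) S[OF Kc] that by blast
  have disj: "q \<notin> (\<Union>k<K. S k)" if "q \<in> S K" for q using oldW S[OF Kc] that by blast
  have U: "(\<Union>k<Suc K. S k) = (\<Union>k<K. S k) \<union> S K" by (auto simp: lessThan_Suc)
  show ?case unfolding U
  proof
    fix p assume p: "p \<in> (\<Union>k<K. S k) \<union> S K"
    show "\<exists>Q. isquad c Q \<and> (\<forall>q\<in>(\<Union>k<K. S k) \<union> S K - {p}. Q q = 0) \<and> Q p \<noteq> 0"
    proof (cases "p \<in> S K")
      case True
      obtain L where L: "Vector_Spaces.linear sc (*) L"
        "\<forall>x\<in>S K. L x = (\<lambda>x. if x = p then 1 else 0) x"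
        using VK.linear_independent_extend[OF Si[OF Kc], where f="\<lambda>x. if x = p then 1 else 0"] by blast
      show ?thesis
      proof (intro exI conjI ballI)
        show "isquad c (\<lambda>v. h v * L v)" by (rule isquad_prod[OF h(1) L(1)])
        fix q assume "q \<in> (\<Union>k<K. S k) \<union> S K - {p}"
        then show "h q * L q = 0" using hold L(2) by auto
      next
        show "h p * L p \<noteq> 0" using hnew[OF True] L(2) True by simp
      qed
    next
      case False
      then have pold: "p \<in> (\<Union>k<K. S k)" using p by blast
      obtain Q1 where Q1: "isquad c Q1" "\<forall>q\<in>(\<Union>k<K. S k) - {p}. Q1 q = 0" "Q1 p \<noteq> 0"
        using IH pold by blast
      obtain L where L: "Vector_Spaces.linear sc (*) L"
        "\<forall>x\<in>S K. L x = (\<lambda>x. - Q1 x / h x) x"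
        using VK.linear_independent_extend[OF Si[OF Kc], where f="\<lambda>x. - Q1 x / h x"] by blast
      show ?thesis
      proof (intro exI conjI ballI)
        show "isquad c (\<lambda>v. Q1 v + h v * L v)"
          by (rule isquad_add[OF Q1(1) isquad_prod[OF h(1) L(1)]])
        fix q assume q: "q \<in> (\<Union>k<K. S k) \<union> S K - {p}"
        show "Q1 q + h q * L q = 0"
        proof (cases "q \<in> S K")
          case True
          then show ?thesis using L(2) hnew[OF True] by simp
        next
          case False
          then show ?thesis using q Q1(2) hold by auto
        qed
      next
        show "Q1 p + h p * L p \<noteq> 0" using Q1(3) hold[OF pold] by simp
      qed
    qed
  qed
qed


definition NN where "NN k = card {x\<in>G. x \<in> WW e k}"
definition LL where "LL k = {x\<in>G. x \<in> WW e (Suc k)} - {x\<in>G. x \<in> WW e k}"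
definition dd where "dd k = card (LL k)"

lemma finL: "finite (LL k)" unfolding LL_def using finG by auto

lemma N_Suc: "NN (Suc k) = NN k + dd k"
proof -
  have sub: "{x\<in>G. x \<in> WW e k} \<subseteq> {x\<in>G. x \<in> WW e (Suc k)}" using W_mono[of k "Suc k"] by auto
  have "card (LL k) = NN (Suc k) - NN k"
    unfolding LL_def NN_def by (rule card_Diff_subset) (use finG sub in auto)
  moreover have "NN k \<le> NN (Suc k)" unfolding NN_def by (rule card_mono) (use finG sub in auto)
  ultimately show ?thesis unfolding dd_def by simp
qed

lemma N_sum: "NN (Suc k) = (\<Sum>j\<le>k. dd j)"
proof (induction k)
  case 0
  have "WW e 0 = {0}" unfolding WW_def by simp
  then have "NN 0 = 0" unfolding NN_def using G0 by auto
  then show ?case using N_Suc[of 0] by simp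
next
  case (Suc k)
  then show ?case using N_Suc[of "Suc k"] by simp
qed

lemma card_e: "X \<subseteq> {..c} \<Longrightarrow> card (e ` X) = card X"
  using e_inj by (simp add: card_image inj_on_subset)

lemma N_nu: assumes "k \<le> c" shows "NN (Suc k) = \<nu> k"
proof -
  have "{..<Suc k} \<subseteq> {..c}" using assms by auto
  then have "card (e ` {..<Suc k}) = Suc k" using card_e[of "{..<Suc k}"] by simp
  moreover have "e ` {..<Suc k} \<subseteq> e ` {..c}" using assms by auto
  ultimately show ?thesis unfolding NN_def WW_def
    using unif[OF assms, of "e ` {..<Suc k}"] indep_sub e_in by blast
qed

lemma e_in_L: assumes "k \<le> c" shows "e k \<in> LL k"
  unfolding LL_def using e_in_W[of k] e_notin_W[OF assms] e_in assms by auto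

lemma dd_pos: "k \<le> c \<Longrightarrow> 1 \<le> dd k"
  unfolding dd_def using e_in_L finL by (metis One_nat_def Suc_leI card_gt_0_iff empty_iff)

lemma dd0: "dd 0 = 1"
proof -
  have "LL 0 = {e 0}"
  proof
    show "{e 0} \<subseteq> LL 0" using e_in_L[of 0] by simp
    show "LL 0 \<subseteq> {e 0}"
    proof
      fix x assume "x \<in> LL 0"
      then have "x \<in> G" "x \<in> V.span {e 0}" unfolding LL_def WW_def by (auto simp: lessThan_Suc)
      then show "x \<in> {e 0}" using nonpar[of x "e 0"] e_in by auto
    qed
  qed
  then show ?thesis unfolding dd_def by simp
qed

lemma dd_mono: assumes "Suc k \<le> c" shows "dd k \<le> dd (Suc k)"
proof -
  let ?X = "insert (e (Suc k)) (e ` {..<k})"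
  have Xsub: "?X \<subseteq> e ` {..c}" using assms by auto
  have nin: "e (Suc k) \<notin> e ` {..<k}"
  proof
    assume "e (Suc k) \<in> e ` {..<k}"
    then obtain x where x: "x < k" "e (Suc k) = e x" by auto
    then have "Suc k = x" using inj_onD[OF e_inj x(2)] assms by auto
    then show False using x by simp
  qed
  have "{..<k} \<subseteq> {..c}" using assms by auto
  then have "card (e ` {..<k}) = k" using card_e[of "{..<k}"] by simp
  then have cX: "card ?X = Suc k" using nin by simp
  let ?A = "{y\<in>G. y \<in> V.span ?X}"
  let ?B = "{y\<in>G. y \<in> WW e k}"
  have cA: "card ?A = NN (Suc k)"
  proof -
    have XG: "?X \<subseteq> G" using Xsub e_in by blast
    have Xi: "V.independent ?X" using indep_sub Xsub by blast
    show ?thesis using unif[OF _ XG cX Xi] N_nu[of k] assms by simp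
  qed
  have BA: "?B \<subseteq> ?A" unfolding WW_def by (auto intro: V.span_mono[THEN subsetD, rotated])
  have "card (?A - ?B) = card ?A - card ?B" by (rule card_Diff_subset) (use finG BA in auto)
  then have cAB: "card (?A - ?B) = dd k" using cA N_Suc[of k] unfolding NN_def by simp
  have "?A - ?B \<subseteq> LL (Suc k)"
  proof
    fix y assume y: "y \<in> ?A - ?B"
    then have yG: "y \<in> G" and yX: "y \<in> V.span ?X" and ynk: "y \<notin> WW e k" by auto
    have "V.span ?X \<subseteq> WW e (Suc (Suc k))" unfolding WW_def by (intro V.span_mono) auto
    then have y2: "y \<in> WW e (Suc (Suc k))" using yX by blast
    obtain t where t: "y - sc t (e (Suc k)) \<in> WW e k"
      using yX unfolding WW_def V.span_breakdown_eq by blast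
    have "y \<notin> WW e (Suc k)"
    proof
      assume y1: "y \<in> WW e (Suc k)"
      have t1: "y - sc t (e (Suc k)) \<in> WW e (Suc k)" using t W_mono[of k "Suc k"] by auto
      have "y - (y - sc t (e (Suc k))) \<in> WW e (Suc k)"
        using V.span_diff[of y "e ` {..<Suc k}" "y - sc t (e (Suc k))"] y1 t1 unfolding WW_def by blast
      then have st: "sc t (e (Suc k)) \<in> WW e (Suc k)" by simp
      show False
      proof (cases "t = 0")
        case True
        then show False using t ynk by (simp add: V.scale_zero_left)
      next
        case False
        have "sc (inverse t) (sc t (e (Suc k))) \<in> WW e (Suc k)"
          unfolding WW_def by (rule V.span_scale) (use st in \<open>simp add: WW_def\<close>)
        then have "e (Suc k) \<in> WW e (Suc k)" using False by simp
        then show False using e_notin_W[OF assms] by simp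
      qed
    qed
    then show "y \<in> LL (Suc k)" unfolding LL_def using yG y2 by auto
  qed
  then have "card (?A - ?B) \<le> dd (Suc k)" unfolding dd_def by (intro card_mono finL)
  then show ?thesis using cAB by simp
qed


lemma N_top: "NN (Suc c) = card G"
proof -
  have "G \<subseteq> WW e (Suc c)" using Gvecs e_span unfolding WW_def by (auto simp: lessThan_Suc_atMost)
  then have "{x\<in>G. x \<in> WW e (Suc c)} = G" by auto
  then show ?thesis unfolding NN_def by simp
qed

lemma sum_dd: "(\<Sum>k\<le>c. dd k) = card G" using N_sum[of c] N_top by simp

lemma ex2: "\<exists>k\<le>c. 2 \<le> dd k"
proof (rule ccontr)
  assume "\<not> ?thesis"
  then have "\<forall>k\<le>c. dd k \<le> 1" by auto
  then have "(\<Sum>k\<le>c. dd k) \<le> (\<Sum>k\<le>c. 1)" by (intro sum_mono) auto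
  then show False using sum_dd cardG c1 by simp
qed

definition mm where "mm = (LEAST k. 2 \<le> dd k)"

lemma mm_props: "mm \<le> c" "2 \<le> dd mm" "\<And>j. j < mm \<Longrightarrow> dd j = 1" "1 \<le> mm"
proof -
  obtain k where k: "k \<le> c" "2 \<le> dd k" using ex2 by blast
  show "mm \<le> c" unfolding mm_def using Least_le[of "\<lambda>k. 2 \<le> dd k" k] k by simp
  show "2 \<le> dd mm" unfolding mm_def using LeastI[of "\<lambda>k. 2 \<le> dd k" k] k by simp
  show "dd j = 1" if "j < mm" for j
  proof -
    have "\<not> 2 \<le> dd j" using not_less_Least[of j "\<lambda>k. 2 \<le> dd k"] that unfolding mm_def by blast
    moreover have "j \<le> c" using that \<open>mm \<le> c\<close> by simp
    ultimately show ?thesis using dd_pos[of j] by simp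
  qed
  show "1 \<le> mm"
  proof (rule ccontr)
    assume "\<not> 1 \<le> mm" then have "mm = 0" by simp
    then show False using \<open>2 \<le> dd mm\<close> dd0 by simp
  qed
qed

lemma dd_ge2: "mm \<le> k \<Longrightarrow> k \<le> c \<Longrightarrow> 2 \<le> dd k"
proof (induction k)
  case 0
  then show ?case using mm_props(2) by simp
next
  case (Suc k)
  show ?case
  proof (cases "mm = Suc k")
    case True
    then show ?thesis using mm_props(2) by simp
  next
    case False
    then have "2 \<le> dd k" using Suc by simp
    then show ?thesis using dd_mono[of k] Suc by simp
  qed
qed

lemma nu_small: assumes "j < mm" shows "\<nu> j = Suc j"
proof -
  have "j \<le> c" using assms mm_props(1) by simp
  then have "\<nu> j = (\<Sum>i\<le>j. dd i)" using N_nu[of j] N_sum[of j] by simp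
  also have "\<dots> = (\<Sum>i\<le>j. 1)" using mm_props(3) assms by (intro sum.cong) auto
  finally show ?thesis by simp
qed

lemma small_indep:
  assumes "X \<subseteq> G" "card X \<le> Suc mm"
  shows "V.independent X"
proof (rule ccontr)
  assume dep: "\<not> V.independent X"
  have fX: "finite X" using assms(1) finG finite_subset by blast
  obtain Y where Y: "Y \<subseteq> X" "V.independent Y" "X \<subseteq> V.span Y"
    using V.maximal_independent_subset[of X] by blast
  have "Y \<noteq> X" using Y dep by blast
  then have cY: "card Y < card X" using Y(1) fX by (simp add: psubset_card_mono psubset_eq)
  have "Y \<noteq> {}"
  proof
    assume "Y = {}"
    then have "X \<subseteq> {0}" using Y(3) by simp
    then have "X = {}" using assms(1) G0 by blast
    then show False using dep by (simp add: V.dependent_def)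
  qed
  then obtain j where j: "card Y = Suc j" using fX Y(1) finite_subset
    by (metis card_0_eq not0_implies_Suc)
  have jm: "j < mm" using j cY assms(2) by simp
  have "card {x\<in>G. x \<in> V.span Y} = \<nu> j"
    using unif[of j Y] j Y(1,2) assms(1) jm mm_props(1) by auto
  then have "card {x\<in>G. x \<in> V.span Y} = card Y" using nu_small[OF jm] j by simp
  moreover have "card X \<le> card {x\<in>G. x \<in> V.span Y}"
    using Y(3) assms(1) finG by (intro card_mono) auto
  ultimately show False using cY by simp
qed

definition SS where "SS k = (SOME T. T \<subseteq> LL k \<and> e k \<in> T \<and> card T = min (dd k) (Suc mm))"

lemma SS_props:
  assumes "k \<le> c"
  shows "SS k \<subseteq> LL k" "e k \<in> SS k" "card (SS k) = min (dd k) (Suc mm)"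
proof -
  have "\<exists>T. T \<subseteq> LL k \<and> e k \<in> T \<and> card T = min (dd k) (Suc mm)"
  proof -
    have ek: "e k \<in> LL k" using e_in_L[OF assms] .
    have "min (dd k) (Suc mm) - 1 \<le> card (LL k - {e k})"
      using ek finL unfolding dd_def by simp
    then obtain T where T: "T \<subseteq> LL k - {e k}" "card T = min (dd k) (Suc mm) - 1" "finite T"
      by (rule obtain_subset_with_card_n)
    have "e k \<notin> T" using T(1) by blast
    then have "card (insert (e k) T) = Suc (min (dd k) (Suc mm) - 1)" using T by simp
    also have "\<dots> = min (dd k) (Suc mm)" using dd_pos[OF assms] by simp
    finally show ?thesis using T ek by (intro exI[of _ "insert (e k) T"]) auto
  qed
  then have "SS k \<subseteq> LL k \<and> e k \<in> SS k \<and> card (SS k) = min (dd k) (Suc mm)"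
    unfolding SS_def by (rule someI_ex)
  then show "SS k \<subseteq> LL k" "e k \<in> SS k" "card (SS k) = min (dd k) (Suc mm)" by auto
qed

lemma LL_disj: "j < k \<Longrightarrow> LL j \<inter> LL k = {}"
  unfolding LL_def using W_mono[of "Suc j" k] by auto

lemma flagged_main:
  "\<exists>S\<subseteq>G. card S = 2*c+1 \<and> vecs c \<subseteq> V.span S \<and>
     (\<forall>p\<in>S. \<exists>Q. isquad c Q \<and> (\<forall>q\<in>S-{p}. Q q = 0) \<and> Q p \<noteq> 0)"
proof -
  let ?U = "\<Union>k<Suc c. SS k"
  have SL: "SS k \<subseteq> WW e (Suc k) - WW e k" if "k \<le> c" for k
    using SS_props(1)[OF that] unfolding LL_def by auto
  have SG: "SS k \<subseteq> G" if "k \<le> c" for k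
    using SS_props(1)[OF that] unfolding LL_def by auto
  have Si: "V.independent (SS k)" if "k \<le> c" for k
    using small_indep[OF SG[OF that]] SS_props(3)[OF that] by simp
  have reg: "\<forall>p\<in>?U. \<exists>Q. isquad c Q \<and> (\<forall>q\<in>?U - {p}. Q q = 0) \<and> Q p \<noteq> 0"
    by (rule layered[OF SL Si]) auto
  have finS: "finite (SS k)" if "k \<le> c" for k using SG[OF that] finG finite_subset by blast
  have "card ?U = (\<Sum>k<Suc c. card (SS k))"
  proof (rule card_UN_disjoint)
    show "\<forall>i\<in>{..<Suc c}. finite (SS i)" using finS by auto
    show "\<forall>i\<in>{..<Suc c}. \<forall>j\<in>{..<Suc c}. i \<noteq> j \<longrightarrow> SS i \<inter> SS j = {}"
    proof (intro ballI impI)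
      fix i j assume ij: "i \<in> {..<Suc c}" "j \<in> {..<Suc c}" "i \<noteq> j"
      show "SS i \<inter> SS j = {}"
      proof (cases "i < j")
        case True then show ?thesis using LL_disj[OF True] SS_props(1)[of i] SS_props(1)[of j] ij by auto
      next
        case False then have "j < i" using ij by simp
        then show ?thesis using LL_disj[of j i] SS_props(1)[of i] SS_props(1)[of j] ij by auto
      qed
    qed
  qed simp
  also have "\<dots> = (\<Sum>k\<le>c. min (dd k) (Suc mm))"
    using SS_props(3) by (simp add: lessThan_Suc_atMost)
  finally have cU: "2*c+1 \<le> card ?U"
    using arith_sum[of mm c dd] mm_props dd_ge2 sum_dd cardG by simp
  have BU: "e ` {..c} \<subseteq> ?U" using SS_props(2) by (auto simp: lessThan_Suc_atMost)
  have finU: "finite ?U" using finS by auto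
  have cB: "card (e ` {..c}) = Suc c" using card_e[of "{..c}"] by simp
  have "c \<le> card (?U - e ` {..c})" using cU cB BU finU by (simp add: card_Diff_subset)
  then obtain T where T: "T \<subseteq> ?U - e ` {..c}" "card T = c" "finite T"
    by (rule obtain_subset_with_card_n)
  let ?S = "e ` {..c} \<union> T"
  have dj: "e ` {..c} \<inter> T = {}" using T(1) by blast
  have cS: "card ?S = 2*c+1"
    using T cB card_Un_disjoint[of "e ` {..c}" T] dj by simp
  have SU: "?S \<subseteq> ?U" using T(1) BU by blast
  have UG: "?U \<subseteq> G"
  proof
    fix x assume "x \<in> ?U"
    then obtain k where "k < Suc c" "x \<in> SS k" by blast
    then show "x \<in> G" using SG[of k] by auto
  qed
  have sp: "vecs c \<subseteq> V.span ?S"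
  proof -
    have "V.span (e ` {..c}) \<subseteq> V.span ?S" by (rule V.span_mono) blast
    then show ?thesis using e_span by blast
  qed
  have rg: "\<forall>p\<in>?S. \<exists>Q. isquad c Q \<and> (\<forall>q\<in>?S-{p}. Q q = 0) \<and> Q p \<noteq> 0"
  proof
    fix p assume p: "p \<in> ?S"
    then have "p \<in> ?U" using SU by blast
    then obtain Q where Q: "isquad c Q" "\<forall>q\<in>?U - {p}. Q q = 0" "Q p \<noteq> 0" using reg by blast
    have "\<forall>q\<in>?S-{p}. Q q = 0" using Q(2) SU by blast
    then show "\<exists>Q. isquad c Q \<and> (\<forall>q\<in>?S-{p}. Q q = 0) \<and> Q p \<noteq> 0" using Q by blast
  qed
  have SG': "?S \<subseteq> G" using SU UG by (rule subset_trans)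
  show ?thesis
    by (rule exI[of _ ?S], intro conjI, fact SG', fact cS, fact sp, fact rg)
qed

end

definition rep :: "(nat \<Rightarrow> 'k::field) set \<Rightarrow> (nat \<Rightarrow> 'k)" where
  "rep p = (SOME v. v \<noteq> 0 \<and> p = proj_pt v)"

lemma proj_pt_mem: "w \<in> proj_pt v \<longleftrightarrow> (\<exists>a. w = sc a v)"
  unfolding proj_pt_def sc_def by simp

lemma proj_pt_scale: "k \<noteq> 0 \<Longrightarrow> proj_pt (sc k w) = proj_pt (w :: nat \<Rightarrow> 'k::field)"
proof (rule set_eqI)
  fix x assume k: "k \<noteq> 0"
  show "x \<in> proj_pt (sc k w) \<longleftrightarrow> x \<in> proj_pt w"
  proof
    assume "x \<in> proj_pt (sc k w)"
    then obtain a where "x = sc a (sc k w)" unfolding proj_pt_mem by (elim exE)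
    then have "x = sc (a * k) w" by (simp only: V.scale_scale)
    then show "x \<in> proj_pt w" unfolding proj_pt_mem by (rule exI)
  next
    assume "x \<in> proj_pt w"
    then obtain a where "x = sc a w" unfolding proj_pt_mem by (elim exE)
    moreover have "sc (a / k) (sc k w) = sc a w" using k by (simp only: V.scale_scale) simp
    ultimately have "x = sc (a / k) (sc k w)" by (simp only:)
    then show "x \<in> proj_pt (sc k w)" unfolding proj_pt_mem by (rule exI)
  qed
qed

lemma rep_props:
  assumes "p \<in> proj_space c"
  shows "rep p \<noteq> 0" "p = proj_pt (rep p)" "rep p \<in> p" "rep p \<in> vecs c"
proof -
  obtain v where v: "v \<in> vecs c" "v \<noteq> (\<lambda>_. 0)" "p = proj_pt v"
    using assms unfolding proj_space_def by blast
  have v0: "v \<noteq> 0" using v(2) by (simp add: func_zero)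
  have ex: "\<exists>v. v \<noteq> 0 \<and> p = proj_pt v" using v0 v(3) by blast
  have r: "rep p \<noteq> 0 \<and> p = proj_pt (rep p)" unfolding rep_def by (rule someI_ex[OF ex])
  then show "rep p \<noteq> 0" "p = proj_pt (rep p)" by auto
  have "rep p = sc 1 (rep p)" by (simp add: sc_def)
  then have "rep p \<in> proj_pt (rep p)" unfolding proj_pt_mem by blast
  then show rp: "rep p \<in> p" using r by simp
  then obtain a where "rep p = sc a v" using v(3) proj_pt_mem by blast
  then show "rep p \<in> vecs c" using v(1) by (simp add: vecs_def sc_def)
qed

lemma mem_rep1: "p \<in> proj_space c \<Longrightarrow> w \<in> p \<Longrightarrow> \<exists>a. w = sc a (rep p)"
  using rep_props(2) proj_pt_mem by metis

lemma mem_rep2: "p \<in> proj_space c \<Longrightarrow> sc a (rep p) \<in> p"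
  using rep_props(2) proj_pt_mem by metis

lemma rep_inj: "inj_on rep (proj_space c)"
  by (rule inj_onI) (metis rep_props(2))

lemma sub_p: assumes "p \<in> proj_space c" "V.subspace A" "rep p \<in> A" shows "p \<subseteq> A"
proof
  fix w assume "w \<in> p"
  then obtain a where "w = sc a (rep p)" using mem_rep1[OF assms(1)] by blast
  then show "w \<in> A" using assms(2,3) V.subspace_scale by blast
qed

lemma lspan_eq:
  assumes "finite S" "S \<subseteq> proj_space c"
  shows "lspan S = V.span (rep ` S)"
proof
  show "lspan S \<subseteq> V.span (rep ` S)"
  proof
    fix x assume "x \<in> lspan S"
    then have "\<exists>f. x = (\<lambda>i. \<Sum>p\<in>S. f p i) \<and> (\<forall>p\<in>S. f p \<in> p)" unfolding lspan_def by simp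
    then obtain f where f: "x = (\<lambda>i. \<Sum>p\<in>S. f p i)" "\<forall>p\<in>S. f p \<in> p" by (elim exE conjE)
    have "x = (\<Sum>p\<in>S. f p)" using f(1) by (simp add: fun_eq_iff sum_fun_app)
    also have "\<dots> \<in> V.span (rep ` S)"
    proof (rule V.span_sum)
      fix p assume p: "p \<in> S"
      then have pp: "p \<in> proj_space c" using assms(2) by blast
      obtain a where "f p = sc a (rep p)" using mem_rep1[OF pp] f(2) p by blast
      moreover have "rep p \<in> V.span (rep ` S)" using p by (intro V.span_base) blast
      ultimately show "f p \<in> V.span (rep ` S)" using V.span_scale by metis
    qed
    finally show "x \<in> V.span (rep ` S)" .
  qed
  show "V.span (rep ` S) \<subseteq> lspan S"
  proof
    fix x assume "x \<in> V.span (rep ` S)"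
    then obtain u where u: "x = (\<Sum>v\<in>rep ` S. sc (u v) v)"
      using V.span_finite[of "rep ` S"] assms(1) by auto
    have inj: "inj_on rep S" using inj_on_subset[OF rep_inj assms(2)] .
    have "x = (\<Sum>p\<in>S. sc (u (rep p)) (rep p))" using u sum.reindex[OF inj] by simp
    then have "x = (\<lambda>i. \<Sum>p\<in>S. sc (u (rep p)) (rep p) i)" by (simp add: fun_eq_iff sum_fun_app)
    moreover have "\<forall>p\<in>S. sc (u (rep p)) (rep p) \<in> p"
    proof
      fix p assume "p \<in> S" then have "p \<in> proj_space c" using assms(2) by blast
      then show "sc (u (rep p)) (rep p) \<in> p" by (rule mem_rep2)
    qed
    ultimately have "\<exists>f. x = (\<lambda>i. \<Sum>p\<in>S. f p i) \<and> (\<forall>p\<in>S. f p \<in> p)"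
      by (intro exI[of _ "\<lambda>p. sc (u (rep p)) (rep p)"] conjI)
    then show "x \<in> lspan S" unfolding lspan_def by simp
  qed
qed

lemma indep_to_pts:
  assumes "finite S" "S \<subseteq> proj_space c" "V.independent (rep ` S)"
  shows "lin_indep_pts S"
  unfolding lin_indep_pts_def
proof (intro conjI allI impI ballI)
  show "finite S" by fact
  fix f p assume f: "(\<forall>p\<in>S. f p \<in> p) \<and> (\<lambda>i. \<Sum>p\<in>S. f p i) = (\<lambda>_. 0)" and p: "p \<in> S"
  have f1: "\<forall>p\<in>S. f p \<in> p" using f by (rule conjunct1)
  have f2: "(\<lambda>i. \<Sum>p\<in>S. f p i) = (\<lambda>_. 0)" using f by (rule conjunct2)
  define a where "a p = (SOME a. f p = sc a (rep p))" for p
  have fa: "f q = sc (a q) (rep q)" if q: "q \<in> S" for q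
  proof -
    have qq: "q \<in> proj_space c" using assms(2) q by (rule subsetD)
    have "f q \<in> q" using f1 q by (rule bspec)
    then have "\<exists>a. f q = sc a (rep q)" by (rule mem_rep1[OF qq])
    then show ?thesis unfolding a_def by (rule someI_ex)
  qed
  have inj: "inj_on rep S" using inj_on_subset[OF rep_inj assms(2)] .
  define u where "u v = a (the_inv_into S rep v)" for v
  have "(\<Sum>v\<in>rep ` S. sc (u v) v) = (\<Sum>q\<in>S. sc (u (rep q)) (rep q))"
    using sum.reindex[OF inj] by simp
  also have "\<dots> = (\<Sum>q\<in>S. f q)"
  proof (rule sum.cong)
    fix q assume q: "q \<in> S"
    have "u (rep q) = a q" unfolding u_def using the_inv_into_f_f[OF inj q] by simp
    then show "sc (u (rep q)) (rep q) = f q" using fa[OF q] by simp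
  qed simp
  also have "\<dots> = 0"
  proof -
    from f2 show ?thesis by (simp add: fun_eq_iff sum_fun_app)
  qed
  finally have s0: "(\<Sum>v\<in>rep ` S. sc (u v) v) = 0" .
  have "u (rep p) = 0"
    by (rule V.independentD[OF assms(3) _ subset_refl s0]) (use assms(1) p in auto)
  then have "a p = 0" unfolding u_def using the_inv_into_f_f[OF inj p] by simp
  then show "f p = (\<lambda>_. 0)" using fa[OF p] by (simp add: sc_def fun_eq_iff)
qed

lemma quad_form_scale: "quad_form c a (sc t v) = t^2 * quad_form c a v"
proof -
  have e: "a j k * sc t v j * sc t v k = t^2 * (a j k * v j * v k)" for j k
    unfolding sc_app power2_eq_square by algebra
  show ?thesis unfolding quad_form_def e sum_distrib_left ..
qed



lemma Collect_subset_lemma: "{p\<in>A. P p} \<subseteq> A" by auto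

lemma img_sub: assumes "X \<subseteq> f ` A" shows "f ` {p\<in>A. f p \<in> X} = X"
proof (rule set_eqI)
  fix x show "x \<in> f ` {p\<in>A. f p \<in> X} \<longleftrightarrow> x \<in> X"
  proof
    assume "x \<in> f ` {p\<in>A. f p \<in> X}"
    then obtain p where "x = f p" "p \<in> {p\<in>A. f p \<in> X}" by (rule imageE)
    then show "x \<in> X" by simp
  next
    assume xX: "x \<in> X"
    have "x \<in> f ` A" using assms xX by (rule subsetD)
    then obtain p where p: "x = f p" "p \<in> A" by (rule imageE)
    then have "p \<in> {p\<in>A. f p \<in> X}" using xX by simp
    then show "x \<in> f ` {p\<in>A. f p \<in> X}" using p(1) by (rule rev_image_eqI)
  qed
qed

lemma img_filter: "{x\<in>f ` A. P x} = f ` {p\<in>A. P (f p)}"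
proof (rule set_eqI)
  fix x show "x \<in> {x\<in>f ` A. P x} \<longleftrightarrow> x \<in> f ` {p\<in>A. P (f p)}"
  proof
    assume "x \<in> {x\<in>f ` A. P x}"
    then have x: "x \<in> f ` A" "P x" by auto
    obtain p where p: "x = f p" "p \<in> A" using x(1) by (rule imageE)
    then have "p \<in> {p\<in>A. P (f p)}" using x(2) by simp
    then show "x \<in> f ` {p\<in>A. P (f p)}" using p(1) by (rule rev_image_eqI)
  next
    assume "x \<in> f ` {p\<in>A. P (f p)}"
    then obtain p where "x = f p" "p \<in> {p\<in>A. P (f p)}" by (rule imageE)
    then show "x \<in> {x\<in>f ` A. P x}" by simp
  qed
qed

theorem proposition2p1:
  fixes \<Gamma> :: "(nat \<Rightarrow> 'k::alg_closed_field) set set"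
    and c d :: nat
  assumes "c \<ge> 1"
    and "\<Gamma> \<subseteq> proj_space c"
    and "finite \<Gamma>"
    and "card \<Gamma> = d"
    and "d \<ge> 2 * c + 1"
    and "linear_semi_uniform c \<Gamma>"
  shows "\<exists>\<Gamma>'\<subseteq>\<Gamma>. card \<Gamma>' = 2 * c + 1 \<and> spans_proj c \<Gamma>' \<and> three_regular c \<Gamma>'"
proof -
  have sp: "spans_proj c \<Gamma>" using assms(6) unfolding linear_semi_uniform_def by (rule conjunct1)
  have "\<exists>\<nu>::nat\<Rightarrow>nat. \<forall>i\<le>c. \<forall>T\<subseteq>\<Gamma>. card T = i + 1 \<and> lin_indep_pts T \<longrightarrow>
        card {p\<in>\<Gamma>. p \<subseteq> lspan T} = \<nu> i"
    using assms(6) unfolding linear_semi_uniform_def by (rule conjunct2)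
  then obtain \<nu> :: "nat \<Rightarrow> nat" where nu: "\<forall>i\<le>c. \<forall>T\<subseteq>\<Gamma>. card T = i + 1 \<and> lin_indep_pts T \<longrightarrow>
        card {p\<in>\<Gamma>. p \<subseteq> lspan T} = \<nu> i" by (rule exE)
  let ?G = "rep ` \<Gamma>"
  have injG: "inj_on rep \<Gamma>" using inj_on_subset[OF rep_inj assms(2)] .
  have finG: "finite ?G" using assms(3) by simp
  have Gv: "?G \<subseteq> vecs c"
  proof
    fix x assume "x \<in> ?G"
    then obtain p where p: "x = rep p" "p \<in> \<Gamma>" by (rule imageE)
    then show "x \<in> vecs c" using rep_props(4)[OF subsetD[OF assms(2) p(2)]] by simp
  qed
  have G0: "0 \<notin> ?G"
  proof
    assume "0 \<in> ?G"
    then obtain p where p: "0 = rep p" "p \<in> \<Gamma>" by (rule imageE)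
    then show False using rep_props(1)[OF subsetD[OF assms(2) p(2)]] by simp
  qed
  have cG: "card ?G = d" using card_image[OF injG] assms(4) by simp
  have lsG: "lspan \<Gamma> = V.span ?G" by (rule lspan_eq[OF assms(3,2)])
  have spanG: "vecs c \<subseteq> V.span ?G" using sp lsG unfolding spans_proj_def by simp
  have nonpar: "x = y" if xy: "x \<in> ?G" "y \<in> ?G" "x \<in> V.span {y}" for x y
  proof -
    obtain p where p: "x = rep p" "p \<in> \<Gamma>" using xy(1) by (rule imageE)
    obtain q where q: "y = rep q" "q \<in> \<Gamma>" using xy(2) by (rule imageE)
    have pp: "p \<in> proj_space c" using assms(2) p(2) by (rule subsetD)
    have qq: "q \<in> proj_space c" using assms(2) q(2) by (rule subsetD)
    have "x \<in> range (\<lambda>k. sc k y)" using xy(3) unfolding V.span_singleton .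
    then obtain k where k: "x = sc k y" by (rule rangeE)
    have "k \<noteq> 0"
    proof
      assume "k = 0"
      then have "x = 0" using k by (simp add: V.scale_zero_left)
      then show False using rep_props(1)[OF pp] p by simp
    qed
    then have "proj_pt x = proj_pt y" using k proj_pt_scale by simp
    then have "p = q" using rep_props(2)[OF pp] rep_props(2)[OF qq] p q by simp
    then show "x = y" using p q by simp
  qed
  have unifG: "card {x\<in>?G. x \<in> V.span X} = \<nu> i"
    if iX: "i \<le> c" "X \<subseteq> ?G" "card X = Suc i" "V.independent X" for i X
  proof -
    let ?T = "{p\<in>\<Gamma>. rep p \<in> X}"
    have TX: "rep ` ?T = X" by (rule img_sub[OF iX(2)])
    have TG: "?T \<subseteq> \<Gamma>" by (rule Collect_subset_lemma)
    have finT: "finite ?T" using assms(3) by simp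
    have TP: "?T \<subseteq> proj_space c" using TG assms(2) by (rule subset_trans)
    have cT: "card ?T = i + 1"
      using card_image[OF inj_on_subset[OF injG TG]] TX iX(3) by simp
    have liT: "lin_indep_pts ?T" using indep_to_pts[OF finT TP] TX iX(4) by simp
    have A: "\<forall>T\<subseteq>\<Gamma>. card T = i + 1 \<and> lin_indep_pts T \<longrightarrow> card {p\<in>\<Gamma>. p \<subseteq> lspan T} = \<nu> i"
      using nu iX(1) by blast
    have c1: "card {p\<in>\<Gamma>. p \<subseteq> lspan ?T} = \<nu> i" using A TG cT liT by blast
    have ls: "lspan ?T = V.span X" using lspan_eq[OF finT TP] TX by simp
    have eqs: "{p\<in>\<Gamma>. p \<subseteq> lspan ?T} = {p\<in>\<Gamma>. rep p \<in> V.span X}"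
    proof (rule Collect_cong)
      fix p
      show "(p \<in> \<Gamma> \<and> p \<subseteq> lspan ?T) = (p \<in> \<Gamma> \<and> rep p \<in> V.span X)"
      proof (cases "p \<in> \<Gamma>")
        case True
        then have pp: "p \<in> proj_space c" using assms(2) by blast
        have "p \<subseteq> V.span X \<longleftrightarrow> rep p \<in> V.span X"
        proof
          assume "p \<subseteq> V.span X" then show "rep p \<in> V.span X" using rep_props(3)[OF pp] by (rule subsetD)
        next
          assume "rep p \<in> V.span X" then show "p \<subseteq> V.span X" by (rule sub_p[OF pp V.subspace_span])
        qed
        then show ?thesis using ls True by simp
      qed simp
    qed
    have "{x\<in>?G. x \<in> V.span X} = rep ` {p\<in>\<Gamma>. rep p \<in> V.span X}" by (rule img_filter)
    moreover have "card (rep ` {p\<in>\<Gamma>. rep p \<in> V.span X}) = card {p\<in>\<Gamma>. rep p \<in> V.span X}"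
      by (rule card_image[OF inj_on_subset[OF injG Collect_subset_lemma]])
    ultimately show ?thesis using c1 eqs by simp
  qed
  obtain B where B: "B \<subseteq> ?G" "V.independent B" "?G \<subseteq> V.span B"
    using V.maximal_independent_subset[of ?G] by blast
  have Bv: "B \<subseteq> vecs c" using B(1) Gv by (rule subset_trans)
  have finB: "finite B" and cB1: "card B \<le> Suc c" using indep_card_le[OF B(2) Bv] by auto
  have "V.span ?G \<subseteq> V.span B" using B(3) by (rule V.span_minimal) simp
  then have "vecs c \<subseteq> V.span B" using spanG by (rule subset_trans[rotated])
  then have cB2: "Suc c \<le> card B" using span_card_ge[OF finB] by simp
  have cB: "card B = Suc c" using cB1 cB2 by simp
  obtain e where e: "bij_betw e {0..<card B} B" using ex_bij_betw_nat_finite[OF finB] by blast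
  have eB: "bij_betw e {..c} B" using e cB by (simp add: atLeast0LessThan lessThan_Suc_atMost)
  have eimg: "e ` {..c} = B" using eB by (simp add: bij_betw_def)
  have einj: "inj_on e {..c}" using eB by (simp add: bij_betw_def)
  interpret F: flagged ?G c \<nu> e
  proof
    show "finite ?G" by fact
    show "?G \<subseteq> vecs c" by fact
    show "0 \<notin> ?G" by fact
    show "2 * c + 1 \<le> card ?G" using cG assms(5) by simp
    show "1 \<le> c" using assms(1) by simp
    show "\<And>x y. x \<in> ?G \<Longrightarrow> y \<in> ?G \<Longrightarrow> x \<in> V.span {y} \<Longrightarrow> x = y" using nonpar by blast
    show "\<And>i X. i \<le> c \<Longrightarrow> X \<subseteq> ?G \<Longrightarrow> card X = Suc i \<Longrightarrow> V.independent X \<Longrightarrow>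
                 card {x\<in>?G. x \<in> V.span X} = \<nu> i" using unifG by blast
    show "e ` {..c} \<subseteq> ?G" using eimg B(1) by simp
    show "V.independent (e ` {..c})" using eimg B(2) by simp
    show "inj_on e {..c}" by fact
    show "vecs c \<subseteq> V.span (e ` {..c})" using eimg \<open>vecs c \<subseteq> V.span B\<close> by simp
  qed
  obtain S where S: "S \<subseteq> ?G" "card S = 2*c+1" "vecs c \<subseteq> V.span S"
    "\<forall>p\<in>S. \<exists>Q. isquad c Q \<and> (\<forall>q\<in>S-{p}. Q q = 0) \<and> Q p \<noteq> 0"
    using F.flagged_main by blast
  let ?\<Gamma>' = "{p\<in>\<Gamma>. rep p \<in> S}"
  have sub: "?\<Gamma>' \<subseteq> \<Gamma>" by blast
  have img: "rep ` ?\<Gamma>' = S" by (rule img_sub[OF S(1)])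
  have fin': "finite ?\<Gamma>'" using assms(3) by simp
  have P': "?\<Gamma>' \<subseteq> proj_space c" using sub assms(2) by (rule subset_trans)
  have card': "card ?\<Gamma>' = 2*c+1"
    using card_image[OF inj_on_subset[OF injG sub]] img S(2) by simp
  have Sv: "S \<subseteq> vecs c" using S(1) Gv by (rule subset_trans)
  have "V.span S \<subseteq> vecs c" using Sv subspace_vecs by (rule V.span_minimal)
  then have "lspan ?\<Gamma>' = vecs c" using lspan_eq[OF fin' P'] img S(3) by simp
  then have span': "spans_proj c ?\<Gamma>'" unfolding spans_proj_def .
  have reg': "three_regular c ?\<Gamma>'"
    unfolding three_regular_def
  proof
    fix p assume p: "p \<in> ?\<Gamma>'"
    then have pp: "p \<in> proj_space c" using P' by blast
    have rpS: "rep p \<in> S" using p by blast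
    obtain Q where Q: "isquad c Q" "\<forall>q\<in>S-{rep p}. Q q = 0" "Q (rep p) \<noteq> 0" using S(4) rpS by blast
    obtain a where a: "\<forall>v\<in>vecs c. Q v = quad_form c a v" using Q(1) unfolding isquad_def by blast
    have "\<forall>q\<in>?\<Gamma>' - {p}. quadric_contains c a q"
    proof
      fix q assume q: "q \<in> ?\<Gamma>' - {p}"
      then have qq: "q \<in> proj_space c" using P' by blast
      have "rep q \<noteq> rep p"
      proof
        assume eq: "rep q = rep p"
        have "q = p" using inj_onD[OF injG eq] q p by simp
        then show False using q by simp
      qed
      then have "rep q \<in> S - {rep p}" using q by blast
      then have Qq: "Q (rep q) = 0" using Q(2) by (intro bspec[OF Q(2)])
      have "Q (rep q) = quad_form c a (rep q)" using a rep_props(4)[OF qq] by (rule bspec)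
      then have Q0: "quad_form c a (rep q) = 0" using Qq by simp
      show "quadric_contains c a q" unfolding quadric_contains_def
      proof
        fix v assume "v \<in> q"
        then have "\<exists>t. v = sc t (rep q)" by (rule mem_rep1[OF qq])
        then obtain t where "v = sc t (rep q)" by (rule exE)
        then show "quad_form c a v = 0" using Q0 by (simp add: quad_form_scale)
      qed
    qed
    moreover have "\<not> quadric_contains c a p"
    proof
      assume "quadric_contains c a p"
      then have "quad_form c a (rep p) = 0" using rep_props(3)[OF pp] unfolding quadric_contains_def by blast
      then show False using a rep_props(4)[OF pp] Q(3) by simp
    qed
    ultimately show "\<exists>a. (\<forall>q\<in>?\<Gamma>' - {p}. quadric_contains c a q) \<and> \<not> quadric_contains c a p"
      by blast
  qed
  show ?thesis by (rule exI[of _ ?\<Gamma>'], intro conjI sub card' span' reg')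
qed

end
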